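(* Let $k\ge1$, $k_1,\dots,k_N\in\{0,\dots,k\}$, $M_a=\#\{j\mid k_j=a\}$ ($1\le a\le k$), and let $V_{\mathbf M}$ be the fusion product $\Pi^{(k_1)}*\cdots*\Pi^{(k_N)}$ with cyclic vector $\mathbf v$ (the image of $v^{(k_1)}\otimes\cdots\otimes v^{(k_N)}$). For an indeterminate $\xi$ and every integer $\nu\ge0$, \[ \deg_z\bigl(X(z)+\xi Z(z)-\xi^2Y(z)\bigr)^\nu\mathbf v\le\sum_{i=1}^k\min(\nu,i)M_i-\nu . \]
   Context: $\mathfrak{o}_5=\{\sum c_{ab}e_{ab}\in\mathfrak{gl}_5\mid c_{ab}+c_{6-b,6-a}=0\}$, $X=e_{12}-e_{45}$, $Y=e_{14}-e_{25}$, $Z=\sqrt2(-e_{13}+e_{35})$; $\mathfrak a=\mathrm{span}(X,Y,Z)$ is abelian. $\Pi^{(k)}$ is the irreducible $\mathfrak{o}_5$-module whose highest weight is $k$ times that of $\mathbb{C}^5$, $v^{(k)}$ its lowest weight vector. Fusion product: for pairwise distinct $\zeta_1,\dots,\zeta_N$, $\mathfrak{o}_5[t]$ acts on $\bigotimes_a\Pi^{(k_a)}$ with $x\otimes t^i$ acting on the $a$-th factor by $\zeta_a^ix$; filter by $U^{\le d}(\mathfrak{o}_5[t])(\otimes_a v^{(k_a)})$ (monomials of total $t$-degree $\le d$); $V_{\mathbf M}$ is the associated graded $\mathfrak{o}_5[t]$-module. For $\eta\in\mathfrak a$, $\eta_i$ denotes the action of $\eta\otimes t^i$ on $V_{\mathbf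 M}$ and $\eta(z)=\sum_{i\ge0}\eta_iz^i$ (a polynomial in $z$ since $\eta_i=0$ for $i\ge N$). $\deg_z P\le d$ means the coefficients of $z^j$, $j>d$, in the vector-valued polynomial $P$ (with coefficients polynomial in $\xi$) vanish; if $d<0$ this means $P=0$. *)

theory Defs
  imports Complex_Main
begin

text \<open>The tensor product of the symmetric powers
  Sym^(k_a)(C^5), a < N, is realised as multihomogeneous polynomials in the
  variables y(a,b), a < N (tensor factor), b in {1..5} (coordinate of C^5).
  A polynomial is given by its coefficient function on monomials; a monomial
  is an exponent function.  The matrix unit e_pq acts on factor a by the
  derivation y(a,p) d/dy(a,q).  The irreducible module Pi^(k) is the
  o_5-submodule of Sym^k(C^5) generated by its lowest weight vector y_5^k, so
  the cyclic subspace generated by the product of the y(a,5)^(k_a) lies in the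
  tensor product of the Pi^(k_a), and the fusion filtration only depends on it.\<close>

type_synonym mon = "nat \<times> nat \<Rightarrow> nat"
type_synonym vec = "mon \<Rightarrow> complex"

text \<open>Matrices are functions nat => nat => complex; only entries with indices
  in {1..5} are used.\<close>
definition o5 :: "(nat \<Rightarrow> nat \<Rightarrow> complex) set" where
  "o5 = {c. \<forall>a\<in>{1..5}. \<forall>b\<in>{1..5}. c a b + c (6 - b) (6 - a) = 0}"

definition Eop :: "nat \<Rightarrow> nat \<Rightarrow> nat \<Rightarrow> vec \<Rightarrow> vec" where
  "Eop a p q f = (\<lambda>\<beta>.
     if p = q then of_nat (\<beta> (a, q)) * f \<beta>
     else if 1 \<le> \<beta> (a, p)
       then of_nat (\<beta> (a, q) + 1) * f (\<beta>((a, p) := \<beta> (a, p) - 1, (a, q) := \<beta> (a, q) + 1))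
       else 0)"

text \<open>Action of x \<otimes> t^i on the tensor product: factor a is scaled by zeta_a^i.\<close>
definition loop_act :: "(nat \<Rightarrow> complex) \<Rightarrow> nat \<Rightarrow> (nat \<Rightarrow> nat \<Rightarrow> complex) \<Rightarrow> nat \<Rightarrow> vec \<Rightarrow> vec" where
  "loop_act \<zeta> N c i f = (\<lambda>\<beta>. \<Sum>a<N. \<zeta> a ^ i * (\<Sum>p\<in>{1..5}. \<Sum>q\<in>{1..5}. c p q * Eop a p q f \<beta>))"

text \<open>Action of a monomial (x_1 \<otimes> t^i_1)...(x_m \<otimes> t^i_m) of U(o_5[t]).\<close>
definition act_word :: "(nat \<Rightarrow> complex) \<Rightarrow> nat \<Rightarrow> ((nat \<Rightarrow> nat \<Rightarrow> complex) \<times> nat) list \<Rightarrow> vec \<Rightarrow> vec" where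
  "act_word \<zeta> N w f = foldr (\<lambda>(c, i) g. loop_act \<zeta> N c i g) w f"

definition cyc_vec :: "nat \<Rightarrow> (nat \<Rightarrow> nat) \<Rightarrow> vec" where
  "cyc_vec N kk = (\<lambda>\<beta>. if \<beta> = (\<lambda>(a, b). if a < N \<and> b = 5 then kk a else 0) then 1 else 0)"

definition fus_gens :: "(nat \<Rightarrow> complex) \<Rightarrow> nat \<Rightarrow> (nat \<Rightarrow> nat) \<Rightarrow> nat \<Rightarrow> vec set" where
  "fus_gens \<zeta> N kk d = {act_word \<zeta> N w (cyc_vec N kk) | w.
      (\<forall>x\<in>set w. fst x \<in> o5) \<and> sum_list (map snd w) \<le> d}"

text \<open>The filtration piece U^{\<le>d}(o_5[t]) v (complex linear span).\<close>
definition fus_fil :: "(nat \<Rightarrow> complex) \<Rightarrow> nat \<Rightarrow> (nat \<Rightarrow> nat) \<Rightarrow> nat \<Rightarrow> vec set" where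
  "fus_fil \<zeta> N kk d = {(\<lambda>\<beta>. \<Sum>j<n. cf j * gg j \<beta>) | (n::nat) (cf::nat \<Rightarrow> complex) (gg::nat \<Rightarrow> vec).
      \<forall>j<n. gg j \<in> fus_gens \<zeta> N kk d}"

definition fus_fil_below :: "(nat \<Rightarrow> complex) \<Rightarrow> nat \<Rightarrow> (nat \<Rightarrow> nat) \<Rightarrow> nat \<Rightarrow> vec set" where
  "fus_fil_below \<zeta> N kk j = (if j = 0 then {(\<lambda>\<beta>. 0)} else fus_fil \<zeta> N kk (j - 1))"

definition matX :: "nat \<Rightarrow> nat \<Rightarrow> complex" where
  "matX p q = (if (p, q) = (1, 2) then 1 else if (p, q) = (4, 5) then -1 else 0)"
definition matY :: "nat \<Rightarrow> nat \<Rightarrow> complex" where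
  "matY p q = (if (p, q) = (1, 4) then 1 else if (p, q) = (2, 5) then -1 else 0)"
definition matZ :: "nat \<Rightarrow> nat \<Rightarrow> complex" where
  "matZ p q = (if (p, q) = (1, 3) then - complex_of_real (sqrt 2)
               else if (p, q) = (3, 5) then complex_of_real (sqrt 2) else 0)"

definition eta :: "complex \<Rightarrow> nat \<Rightarrow> nat \<Rightarrow> complex" where
  "eta \<xi> p q = matX p q + \<xi> * matZ p q - \<xi>^2 * matY p q"

text \<open>Representative in F_j of the coefficient of z^j in eta(z)^nu v:
  the sum over (i_1,...,i_nu) with i_1+...+i_nu = j of
  (eta \<otimes> t^i_1)...(eta \<otimes> t^i_nu) v.\<close>
definition zcoeff :: "(nat \<Rightarrow> complex) \<Rightarrow> nat \<Rightarrow> (nat \<Rightarrow> nat) \<Rightarrow> complex \<Rightarrow> nat \<Rightarrow> nat \<Rightarrow> vec" where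
  "zcoeff \<zeta> N kk \<xi> \<nu> j = (\<lambda>\<beta>. \<Sum>is\<in>{is. length is = \<nu> \<and> sum_list is = j}.
      act_word \<zeta> N (map (\<lambda>i. (eta \<xi>, i)) is) (cyc_vec N kk) \<beta>)"

end

theory Submission
  imports Defs "HOL-Computational_Algebra.Polynomial_FPS"
begin


definition Top :: "complex \<Rightarrow> nat \<Rightarrow> vec \<Rightarrow> vec" where
 "Top \<xi> b f = (\<lambda>\<beta>. \<Sum>p\<in>{1..5}. \<Sum>q\<in>{1..5}. eta \<xi> p q * Eop b p q f \<beta>)"

lemma loop_eta: "loop_act \<zeta> N (eta \<xi>) i f = (\<lambda>\<beta>. \<Sum>a<N. \<zeta> a ^ i * Top \<xi> a f \<beta>)"
  by (simp add: loop_act_def Top_def)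

lemma set15: "{1..5::nat} = {1,2,3,4,5}" by auto

abbreviation s2 :: complex where "s2 \<equiv> complex_of_real (sqrt 2)"

lemma Top_expand: "Top \<xi> b f \<beta> = Eop b 1 2 f \<beta> - s2*\<xi> * Eop b 1 3 f \<beta> - \<xi>^2 * Eop b 1 4 f \<beta>
   + \<xi>^2 * Eop b 2 5 f \<beta> + s2*\<xi>*Eop b 3 5 f \<beta> - Eop b 4 5 f \<beta>"
  unfolding Top_def set15 by (simp add: eta_def matX_def matY_def matZ_def algebra_simps)

lemma Eop_sum: "Eop a p q (\<lambda>\<beta>. \<Sum>s\<in>S. g s \<beta>) \<beta> = (\<Sum>s\<in>S. Eop a p q (g s) \<beta>)"
  by (simp add: Eop_def sum_distrib_left)

lemma Eop_scale: "Eop a p q (\<lambda>\<beta>. c * g \<beta>) \<beta> = c * Eop a p q g \<beta>"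
  by (simp add: Eop_def algebra_simps)

lemma Top_sum: "Top \<xi> b (\<lambda>\<beta>. \<Sum>s\<in>S. g s \<beta>) \<beta> = (\<Sum>s\<in>S. Top \<xi> b (g s) \<beta>)"
  unfolding Top_def Eop_sum sum_distrib_left
  by (subst sum.swap, rule sum.cong, simp, subst sum.swap, simp)

lemma Top_scale: "Top \<xi> b (\<lambda>\<beta>. c * g \<beta>) \<beta> = c * Top \<xi> b g \<beta>"
  unfolding Top_def Eop_scale sum_distrib_left by (simp add: algebra_simps)

lemma Top_zero: "Top \<xi> b (\<lambda>\<beta>. 0) \<beta> = 0"
  using Top_scale[of \<xi> b 0 "\<lambda>\<beta>. 0" \<beta>] by simp




definition coef :: "complex \<Rightarrow> nat \<Rightarrow> nat \<Rightarrow> nat \<Rightarrow> complex" where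
 "coef \<xi> i j l = (\<xi>^2)^i * (s2*\<xi>)^j * (-1)^l / (fact i * fact j * fact l)"

lemma coef_i: "of_nat (Suc i) * coef \<xi> (Suc i) j l = \<xi>^2 * coef \<xi> i j l"
  unfolding coef_def by (simp add: field_simps fact_Suc del: of_nat_Suc)
lemma coef_j: "of_nat (Suc j) * coef \<xi> i (Suc j) l = s2*\<xi> * coef \<xi> i j l"
  unfolding coef_def by (simp add: field_simps fact_Suc del: of_nat_Suc)
lemma coef_l: "of_nat (Suc l) * coef \<xi> i j (Suc l) = - coef \<xi> i j l"
  unfolding coef_def by (simp add: field_simps fact_Suc del: of_nat_Suc)

definition goodH :: "nat \<Rightarrow> (nat \<Rightarrow> nat) \<Rightarrow> (nat \<Rightarrow> nat) \<Rightarrow> mon \<Rightarrow> bool" where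
 "goodH N kk r \<beta> = ((\<forall>a c. (a \<ge> N \<or> c < 1 \<or> c > 5) \<longrightarrow> \<beta> (a,c) = 0) \<and>
    (\<forall>a<N. \<beta>(a,1) = 0 \<and> \<beta>(a,5) + r a = kk a \<and> \<beta>(a,2)+\<beta>(a,3)+\<beta>(a,4) = r a))"

definition restOK :: "nat \<Rightarrow> (nat \<Rightarrow> nat) \<Rightarrow> (nat \<Rightarrow> nat) \<Rightarrow> nat \<Rightarrow> mon \<Rightarrow> bool" where
 "restOK N kk r b \<beta> = ((\<forall>a c. (a \<ge> N \<or> c < 1 \<or> c > 5) \<longrightarrow> \<beta> (a,c) = 0) \<and>
    (\<forall>a<N. a \<noteq> b \<longrightarrow> \<beta>(a,1) = 0 \<and> \<beta>(a,5) + r a = kk a \<and> \<beta>(a,2)+\<beta>(a,3)+\<beta>(a,4) = r a))"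

definition H :: "complex \<Rightarrow> nat \<Rightarrow> (nat \<Rightarrow> nat) \<Rightarrow> (nat \<Rightarrow> nat) \<Rightarrow> vec" where
 "H \<xi> N kk r = (\<lambda>\<beta>. if goodH N kk r \<beta> then (\<Prod>a<N. coef \<xi> (\<beta>(a,2)) (\<beta>(a,3)) (\<beta>(a,4))) else 0)"

lemma goodH_split: "b < N \<Longrightarrow> goodH N kk r \<beta> \<longleftrightarrow> restOK N kk r b \<beta> \<and> \<beta>(b,1) = 0 \<and>
   \<beta>(b,5) + r b = kk b \<and> \<beta>(b,2)+\<beta>(b,3)+\<beta>(b,4) = r b"
  unfolding goodH_def restOK_def by metis

lemma restOK_upd: "1 \<le> c \<Longrightarrow> c \<le> 5 \<Longrightarrow> b < N \<Longrightarrow>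
   restOK N kk r b (\<beta>((b,c) := x)) = restOK N kk r b \<beta>"
  unfolding restOK_def by auto

lemma restOK_r: "restOK N kk (r(b:=t)) b \<beta> = restOK N kk r b \<beta>"
  unfolding restOK_def by auto

lemma prod_upd: "b < N \<Longrightarrow> (\<Prod>a<N. coef \<xi> ((\<beta>'::mon)(a,2)) (\<beta>'(a,3)) (\<beta>'(a,4))) =
   coef \<xi> (\<beta>'(b,2)) (\<beta>'(b,3)) (\<beta>'(b,4)) * (\<Prod>a\<in>{..<N}-{b}. coef \<xi> (\<beta>'(a,2)) (\<beta>'(a,3)) (\<beta>'(a,4)))"
  by (simp add: prod.remove)

lemma H_upd:
  fixes \<beta> :: mon and x y :: nat
  assumes "b < N" "p \<in> {1..5}" "q \<in> {1..5}" "p \<noteq> q"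
  defines "\<beta>' \<equiv> \<beta>((b,p):=x, (b,q):=y)"
  shows "H \<xi> N kk r \<beta>' = (if restOK N kk r b \<beta> \<and> \<beta>'(b,1) = 0 \<and>
   \<beta>'(b,5) + r b = kk b \<and> \<beta>'(b,2)+\<beta>'(b,3)+\<beta>'(b,4) = r b then
     coef \<xi> (\<beta>'(b,2)) (\<beta>'(b,3)) (\<beta>'(b,4)) * (\<Prod>a\<in>{..<N}-{b}. coef \<xi> (\<beta>(a,2)) (\<beta>(a,3)) (\<beta>(a,4))) else 0)"
proof -
  have r: "restOK N kk r b \<beta>' = restOK N kk r b \<beta>"
    using assms restOK_upd unfolding \<beta>'_def by auto
  have p: "(\<Prod>a\<in>{..<N}-{b}. coef \<xi> (\<beta>'(a,2)) (\<beta>'(a,3)) (\<beta>'(a,4))) =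
     (\<Prod>a\<in>{..<N}-{b}. coef \<xi> (\<beta>(a,2)) (\<beta>(a,3)) (\<beta>(a,4)))"
    by (rule prod.cong) (auto simp: \<beta>'_def)
  show ?thesis unfolding H_def using goodH_split[OF assms(1)] r p prod_upd[OF assms(1)]
    by simp
qed



lemma E12:
  fixes \<beta> :: mon
  assumes b: "b < N"
  shows "Eop b 1 2 (H \<xi> N kk r) \<beta> = (if 1 \<le> \<beta>(b,1) then of_nat(\<beta>(b,2)+1) *
   (if restOK N kk r b \<beta> \<and> (\<beta>(b,1) - 1) = 0 \<and> \<beta>(b,5) + r b = kk b \<and> Suc (\<beta>(b,2)) + \<beta>(b,3) + \<beta>(b,4) = r b
    then coef \<xi> (Suc (\<beta>(b,2))) (\<beta>(b,3)) (\<beta>(b,4)) * (\<Prod>a\<in>{..<N}-{b}. coef \<xi> (\<beta>(a,2)) (\<beta>(a,3)) (\<beta>(a,4))) else 0) else 0)"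
proof -
  have e: "Eop b 1 2 (H \<xi> N kk r) \<beta> = (if 1 \<le> \<beta>(b,1) then of_nat(\<beta>(b,2)+1) *
         H \<xi> N kk r (\<beta>((b,1):=\<beta>(b,1) - 1, (b,2):=\<beta>(b,2)+1)) else 0)" by (simp add: Eop_def)
  show ?thesis unfolding e
    apply (subst H_upd[OF b, where p=1 and q=2])
    apply simp
    apply simp
    apply simp
    apply (simp only: fun_upd_apply)
    apply simp
    done
qed

lemma E13:
  fixes \<beta> :: mon
  assumes b: "b < N"
  shows "Eop b 1 3 (H \<xi> N kk r) \<beta> = (if 1 \<le> \<beta>(b,1) then of_nat(\<beta>(b,3)+1) *
   (if restOK N kk r b \<beta> \<and> (\<beta>(b,1) - 1) = 0 \<and> \<beta>(b,5) + r b = kk b \<and> \<beta>(b,2) + Suc (\<beta>(b,3)) + \<beta>(b,4) = r b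
    then coef \<xi> (\<beta>(b,2)) (Suc (\<beta>(b,3))) (\<beta>(b,4)) * (\<Prod>a\<in>{..<N}-{b}. coef \<xi> (\<beta>(a,2)) (\<beta>(a,3)) (\<beta>(a,4))) else 0) else 0)"
proof -
  have e: "Eop b 1 3 (H \<xi> N kk r) \<beta> = (if 1 \<le> \<beta>(b,1) then of_nat(\<beta>(b,3)+1) *
         H \<xi> N kk r (\<beta>((b,1):=\<beta>(b,1) - 1, (b,3):=\<beta>(b,3)+1)) else 0)" by (simp add: Eop_def)
  show ?thesis unfolding e
    apply (subst H_upd[OF b, where p=1 and q=3])
    apply simp
    apply simp
    apply simp
    apply (simp only: fun_upd_apply)
    apply simp
    done
qed

lemma E14:
  fixes \<beta> :: mon
  assumes b: "b < N"
  shows "Eop b 1 4 (H \<xi> N kk r) \<beta> = (if 1 \<le> \<beta>(b,1) then of_nat(\<beta>(b,4)+1) *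
   (if restOK N kk r b \<beta> \<and> (\<beta>(b,1) - 1) = 0 \<and> \<beta>(b,5) + r b = kk b \<and> \<beta>(b,2) + \<beta>(b,3) + Suc (\<beta>(b,4)) = r b
    then coef \<xi> (\<beta>(b,2)) (\<beta>(b,3)) (Suc (\<beta>(b,4))) * (\<Prod>a\<in>{..<N}-{b}. coef \<xi> (\<beta>(a,2)) (\<beta>(a,3)) (\<beta>(a,4))) else 0) else 0)"
proof -
  have e: "Eop b 1 4 (H \<xi> N kk r) \<beta> = (if 1 \<le> \<beta>(b,1) then of_nat(\<beta>(b,4)+1) *
         H \<xi> N kk r (\<beta>((b,1):=\<beta>(b,1) - 1, (b,4):=\<beta>(b,4)+1)) else 0)" by (simp add: Eop_def)
  show ?thesis unfolding e
    apply (subst H_upd[OF b, where p=1 and q=4])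
    apply simp
    apply simp
    apply simp
    apply (simp only: fun_upd_apply)
    apply simp
    done
qed

lemma E25:
  fixes \<beta> :: mon
  assumes b: "b < N"
  shows "Eop b 2 5 (H \<xi> N kk r) \<beta> = (if 1 \<le> \<beta>(b,2) then of_nat(\<beta>(b,5)+1) *
   (if restOK N kk r b \<beta> \<and> \<beta>(b,1) = 0 \<and> Suc (\<beta>(b,5)) + r b = kk b \<and> (\<beta>(b,2) - 1) + \<beta>(b,3) + \<beta>(b,4) = r b
    then coef \<xi> ((\<beta>(b,2) - 1)) (\<beta>(b,3)) (\<beta>(b,4)) * (\<Prod>a\<in>{..<N}-{b}. coef \<xi> (\<beta>(a,2)) (\<beta>(a,3)) (\<beta>(a,4))) else 0) else 0)"
proof -
  have e: "Eop b 2 5 (H \<xi> N kk r) \<beta> = (if 1 \<le> \<beta>(b,2) then of_nat(\<beta>(b,5)+1) *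
         H \<xi> N kk r (\<beta>((b,2):=\<beta>(b,2) - 1, (b,5):=\<beta>(b,5)+1)) else 0)" by (simp add: Eop_def)
  show ?thesis unfolding e
    apply (subst H_upd[OF b, where p=2 and q=5])
    apply simp
    apply simp
    apply simp
    apply (simp only: fun_upd_apply)
    apply simp
    done
qed

lemma E35:
  fixes \<beta> :: mon
  assumes b: "b < N"
  shows "Eop b 3 5 (H \<xi> N kk r) \<beta> = (if 1 \<le> \<beta>(b,3) then of_nat(\<beta>(b,5)+1) *
   (if restOK N kk r b \<beta> \<and> \<beta>(b,1) = 0 \<and> Suc (\<beta>(b,5)) + r b = kk b \<and> \<beta>(b,2) + (\<beta>(b,3) - 1) + \<beta>(b,4) = r b
    then coef \<xi> (\<beta>(b,2)) ((\<beta>(b,3) - 1)) (\<beta>(b,4)) * (\<Prod>a\<in>{..<N}-{b}. coef \<xi> (\<beta>(a,2)) (\<beta>(a,3)) (\<beta>(a,4))) else 0) else 0)"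
proof -
  have e: "Eop b 3 5 (H \<xi> N kk r) \<beta> = (if 1 \<le> \<beta>(b,3) then of_nat(\<beta>(b,5)+1) *
         H \<xi> N kk r (\<beta>((b,3):=\<beta>(b,3) - 1, (b,5):=\<beta>(b,5)+1)) else 0)" by (simp add: Eop_def)
  show ?thesis unfolding e
    apply (subst H_upd[OF b, where p=3 and q=5])
    apply simp
    apply simp
    apply simp
    apply (simp only: fun_upd_apply)
    apply simp
    done
qed

lemma E45:
  fixes \<beta> :: mon
  assumes b: "b < N"
  shows "Eop b 4 5 (H \<xi> N kk r) \<beta> = (if 1 \<le> \<beta>(b,4) then of_nat(\<beta>(b,5)+1) *
   (if restOK N kk r b \<beta> \<and> \<beta>(b,1) = 0 \<and> Suc (\<beta>(b,5)) + r b = kk b \<and> \<beta>(b,2) + \<beta>(b,3) + (\<beta>(b,4) - 1) = r b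
    then coef \<xi> (\<beta>(b,2)) (\<beta>(b,3)) ((\<beta>(b,4) - 1)) * (\<Prod>a\<in>{..<N}-{b}. coef \<xi> (\<beta>(a,2)) (\<beta>(a,3)) (\<beta>(a,4))) else 0) else 0)"
proof -
  have e: "Eop b 4 5 (H \<xi> N kk r) \<beta> = (if 1 \<le> \<beta>(b,4) then of_nat(\<beta>(b,5)+1) *
         H \<xi> N kk r (\<beta>((b,4):=\<beta>(b,4) - 1, (b,5):=\<beta>(b,5)+1)) else 0)" by (simp add: Eop_def)
  show ?thesis unfolding e
    apply (subst H_upd[OF b, where p=4 and q=5])
    apply simp
    apply simp
    apply simp
    apply (simp only: fun_upd_apply)
    apply simp
    done
qed

lemma arith_core:
  fixes o1 i j l m rb kb :: nat and RO :: bool and R \<xi> :: complex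
  shows "(if 1 \<le> o1 then of_nat(i+1) * (if RO \<and> (o1 - 1) = 0 \<and> m + rb = kb \<and> Suc (i) + j + l = rb then coef \<xi> (Suc (i)) (j) (l) * R else 0) else 0) - s2*\<xi> * (if 1 \<le> o1 then of_nat(j+1) * (if RO \<and> (o1 - 1) = 0 \<and> m + rb = kb \<and> i + Suc (j) + l = rb then coef \<xi> (i) (Suc (j)) (l) * R else 0) else 0) - \<xi>^2 * (if 1 \<le> o1 then of_nat(l+1) * (if RO \<and> (o1 - 1) = 0 \<and> m + rb = kb \<and> i + j + Suc (l) = rb then coef \<xi> (i) (j) (Suc (l)) * R else 0) else 0) + \<xi>^2 * (if 1 \<le> i then of_nat(m+1) * (if RO \<and> o1 = 0 \<and> Suc (m) + rb = kb \<and> (i - 1) + j + l = rb then coef \<xi> ((i - 1)) (j) (l) * R else 0) else 0) + s2*\<xi> * (if 1 \<le> j then of_nat(m+1) * (if RO \<and> o1 = 0 \<and> Suc (m) + rb = kb \<and> i + (j - 1) + l = rb then coef \<xi> (i) ((j - 1)) (l) * R else 0) else 0) - (if 1 \<le> l then of_nat(m+1) * (if RO \<and> o1 = 0 \<and> Suc (m) + rb = kb \<and> i + j + (l - 1) = rb then coef \<xi> (i) (j) ((l - 1)) * R else 0) else 0) = of_nat (kb - rb) * of_nat (Suc rb) * (if RO \<and> o1 = 0 \<and> m + Suc rb = kb \<and> i + j + l = Suc rb then coef \<xi> i j l * R else 0)"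
proof -
  have s22: "s2 * s2 = 2"
    by (simp flip: of_real_mult)
  show ?thesis
  proof (cases "o1 = 0")
    case True
    have z1: "(if 1 \<le> o1 then of_nat(i+1) * (if RO \<and> (o1 - 1) = 0 \<and> m + rb = kb \<and> Suc (i) + j + l = rb then coef \<xi> (Suc (i)) (j) (l) * R else 0) else 0) = 0" "(if 1 \<le> o1 then of_nat(j+1) * (if RO \<and> (o1 - 1) = 0 \<and> m + rb = kb \<and> i + Suc (j) + l = rb then coef \<xi> (i) (Suc (j)) (l) * R else 0) else 0) = 0" "(if 1 \<le> o1 then of_nat(l+1) * (if RO \<and> (o1 - 1) = 0 \<and> m + rb = kb \<and> i + j + Suc (l) = rb then coef \<xi> (i) (j) (Suc (l)) * R else 0) else 0) = 0" using True by simp_all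
    show ?thesis
    proof (cases "RO \<and> Suc m + rb = kb \<and> i + j + l = Suc rb")
      case c: True
      have t2: "(if 1 \<le> i then of_nat(m+1) * (if RO \<and> o1 = 0 \<and> Suc (m) + rb = kb \<and> (i - 1) + j + l = rb then coef \<xi> ((i - 1)) (j) (l) * R else 0) else 0) = of_nat (Suc m) * R * (if 1 \<le> i then coef \<xi> (i - 1) j l else 0)"
        using True c by (cases i) auto
      have t3: "(if 1 \<le> j then of_nat(m+1) * (if RO \<and> o1 = 0 \<and> Suc (m) + rb = kb \<and> i + (j - 1) + l = rb then coef \<xi> (i) ((j - 1)) (l) * R else 0) else 0) = of_nat (Suc m) * R * (if 1 \<le> j then coef \<xi> i (j - 1) l else 0)"
        using True c by (cases j) auto
      have t4: "(if 1 \<le> l then of_nat(m+1) * (if RO \<and> o1 = 0 \<and> Suc (m) + rb = kb \<and> i + j + (l - 1) = rb then coef \<xi> (i) (j) ((l - 1)) * R else 0) else 0) = of_nat (Suc m) * R * (if 1 \<le> l then coef \<xi> i j (l - 1) else 0)"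
        using True c by (cases l) auto
      have ki: "of_nat (i) * coef \<xi> i j l = \<xi>^2 * (if 1 \<le> i then coef \<xi> (i - 1) j l else 0)"
        using coef_i[of "i - 1" \<xi> j l] by (cases i) auto
      have kj: "of_nat (j) * coef \<xi> i j l = s2*\<xi> * (if 1 \<le> j then coef \<xi> i (j - 1) l else 0)"
        using coef_j[of "j - 1" \<xi> i l] by (cases j) auto
      have kl: "of_nat (l) * coef \<xi> i j l = - (if 1 \<le> l then coef \<xi> i j (l - 1) else 0)"
        using coef_l[of "l - 1" \<xi> i j] by (cases l) auto
      have kb: "kb - rb = Suc m" using c by auto
      have rr: "of_nat (kb - rb) * of_nat (Suc rb) * (if RO \<and> o1 = 0 \<and> m + Suc rb = kb \<and> i + j + l = Suc rb then coef \<xi> i j l * R else 0) = of_nat (Suc m) * R * (of_nat (i + j + l) * coef \<xi> i j l)"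
        using True c kb by simp
      show ?thesis unfolding z1 t2 t3 t4 rr
        unfolding of_nat_add distrib_right ki kj kl
        by (simp add: algebra_simps)
    next
      case c: False
      have t2: "(if 1 \<le> i then of_nat(m+1) * (if RO \<and> o1 = 0 \<and> Suc (m) + rb = kb \<and> (i - 1) + j + l = rb then coef \<xi> ((i - 1)) (j) (l) * R else 0) else 0) = 0" using True c by (cases i) auto
      have t3: "(if 1 \<le> j then of_nat(m+1) * (if RO \<and> o1 = 0 \<and> Suc (m) + rb = kb \<and> i + (j - 1) + l = rb then coef \<xi> (i) ((j - 1)) (l) * R else 0) else 0) = 0" using True c by (cases j) auto
      have t4: "(if 1 \<le> l then of_nat(m+1) * (if RO \<and> o1 = 0 \<and> Suc (m) + rb = kb \<and> i + j + (l - 1) = rb then coef \<xi> (i) (j) ((l - 1)) * R else 0) else 0) = 0" using True c by (cases l) auto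
      have rr: "of_nat (kb - rb) * of_nat (Suc rb) * (if RO \<and> o1 = 0 \<and> m + Suc rb = kb \<and> i + j + l = Suc rb then coef \<xi> i j l * R else 0) = 0" using True c by auto
      show ?thesis unfolding z1 t2 t3 t4 rr by simp
    qed
  next
    case False
    have z2: "(if 1 \<le> i then of_nat(m+1) * (if RO \<and> o1 = 0 \<and> Suc (m) + rb = kb \<and> (i - 1) + j + l = rb then coef \<xi> ((i - 1)) (j) (l) * R else 0) else 0) = 0" "(if 1 \<le> j then of_nat(m+1) * (if RO \<and> o1 = 0 \<and> Suc (m) + rb = kb \<and> i + (j - 1) + l = rb then coef \<xi> (i) ((j - 1)) (l) * R else 0) else 0) = 0" "(if 1 \<le> l then of_nat(m+1) * (if RO \<and> o1 = 0 \<and> Suc (m) + rb = kb \<and> i + j + (l - 1) = rb then coef \<xi> (i) (j) ((l - 1)) * R else 0) else 0) = 0" "of_nat (kb - rb) * of_nat (Suc rb) * (if RO \<and> o1 = 0 \<and> m + Suc rb = kb \<and> i + j + l = Suc rb then coef \<xi> i j l * R else 0) = 0" using False by simp_all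
    show ?thesis
    proof (cases "o1 = 1 \<and> RO \<and> m + rb = kb \<and> Suc (i + j + l) = rb")
      case c: True
      have t1: "(if 1 \<le> o1 then of_nat(i+1) * (if RO \<and> (o1 - 1) = 0 \<and> m + rb = kb \<and> Suc (i) + j + l = rb then coef \<xi> (Suc (i)) (j) (l) * R else 0) else 0) = R * (of_nat (Suc i) * coef \<xi> (Suc i) j l)" using c by simp
      have t2: "(if 1 \<le> o1 then of_nat(j+1) * (if RO \<and> (o1 - 1) = 0 \<and> m + rb = kb \<and> i + Suc (j) + l = rb then coef \<xi> (i) (Suc (j)) (l) * R else 0) else 0) = R * (of_nat (Suc j) * coef \<xi> i (Suc j) l)" using c by simp
      have t3: "(if 1 \<le> o1 then of_nat(l+1) * (if RO \<and> (o1 - 1) = 0 \<and> m + rb = kb \<and> i + j + Suc (l) = rb then coef \<xi> (i) (j) (Suc (l)) * R else 0) else 0) = R * (of_nat (Suc l) * coef \<xi> i j (Suc l))" using c by simp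
      show ?thesis unfolding z2 t1 t2 t3 coef_i coef_j coef_l
        by (simp add: algebra_simps power2_eq_square s22)
    next
      case c: False
      have t1: "(if 1 \<le> o1 then of_nat(i+1) * (if RO \<and> (o1 - 1) = 0 \<and> m + rb = kb \<and> Suc (i) + j + l = rb then coef \<xi> (Suc (i)) (j) (l) * R else 0) else 0) = 0" using c False by auto
      have t2: "(if 1 \<le> o1 then of_nat(j+1) * (if RO \<and> (o1 - 1) = 0 \<and> m + rb = kb \<and> i + Suc (j) + l = rb then coef \<xi> (i) (Suc (j)) (l) * R else 0) else 0) = 0" using c False by auto
      have t3: "(if 1 \<le> o1 then of_nat(l+1) * (if RO \<and> (o1 - 1) = 0 \<and> m + rb = kb \<and> i + j + Suc (l) = rb then coef \<xi> (i) (j) (Suc (l)) * R else 0) else 0) = 0" using c False by auto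
      show ?thesis unfolding z2 t1 t2 t3 by simp
    qed
  qed
qed

lemma Top_H:
  fixes \<beta> :: mon
  assumes b: "b < N"
  shows "Top \<xi> b (H \<xi> N kk r) \<beta> = of_nat (kk b - r b) * of_nat (Suc (r b)) * H \<xi> N kk (r(b := Suc (r b))) \<beta>"
proof -
  have RHS: "H \<xi> N kk (r(b := Suc (r b))) \<beta> = (if restOK N kk r b \<beta> \<and> \<beta>(b,1) = 0 \<and> \<beta>(b,5) + Suc (r b) = kk b \<and> \<beta>(b,2)+\<beta>(b,3)+\<beta>(b,4) = Suc (r b) then coef \<xi> (\<beta>(b,2)) (\<beta>(b,3)) (\<beta>(b,4)) * (\<Prod>a\<in>{..<N}-{b}. coef \<xi> (\<beta>(a,2)) (\<beta>(a,3)) (\<beta>(a,4))) else 0)"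
    unfolding H_def goodH_split[OF b] restOK_r prod_upd[OF b] by simp
  show ?thesis unfolding Top_expand E12[OF b] E13[OF b] E14[OF b] E25[OF b] E35[OF b] E45[OF b] RHS
    by (rule arith_core)
qed




definition Wv :: "complex \<Rightarrow> nat \<Rightarrow> (nat \<Rightarrow> nat) \<Rightarrow> nat list \<Rightarrow> vec" where
  "Wv \<xi> N kk \<alpha> = foldr (Top \<xi>) \<alpha> (cyc_vec N kk)"

lemma H0: "H \<xi> N kk (\<lambda>_. 0) = cyc_vec N kk"
proof
  fix \<beta> :: mon
  let ?base = "(\<lambda>(a, b). if a < N \<and> b = 5 then kk a else 0) :: mon"
  have g: "goodH N kk (\<lambda>_. 0) \<beta> \<longleftrightarrow> \<beta> = ?base"
  proof
    assume a: "goodH N kk (\<lambda>_. 0) \<beta>"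
    show "\<beta> = ?base"
    proof
      fix x :: "nat \<times> nat"
      obtain a c where x: "x = (a,c)" by (cases x)
      have "c = 0 \<or> c = 1 \<or> c = 2 \<or> c = 3 \<or> c = 4 \<or> c = 5 \<or> c > 5" by linarith
      then show "\<beta> x = ?base x"
        using a unfolding goodH_def x
        by (cases "a < N") auto
    qed
  next
    assume "\<beta> = ?base"
    then show "goodH N kk (\<lambda>_. 0) \<beta>" unfolding goodH_def by auto
  qed
  show "H \<xi> N kk (\<lambda>_. 0) \<beta> = cyc_vec N kk \<beta>"
    unfolding H_def cyc_vec_def g by (auto simp: coef_def)
qed

lemma H_zero: "a < N \<Longrightarrow> r a > kk a \<Longrightarrow> H \<xi> N kk r \<beta> = 0"
  unfolding H_def goodH_def by auto

lemma W_H: "set \<alpha> \<subseteq> {..<N} \<Longrightarrow> \<exists>c. Wv \<xi> N kk \<alpha> = (\<lambda>\<beta>. c * H \<xi> N kk (count_list \<alpha>) \<beta>)"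
proof (induction \<alpha>)
  case Nil
  have "count_list [] = (\<lambda>_::nat. 0::nat)" by (simp add: fun_eq_iff)
  then show ?case by (intro exI[of _ 1]) (simp add: Wv_def H0)
next
  case (Cons b \<alpha>)
  then obtain c where c: "Wv \<xi> N kk \<alpha> = (\<lambda>\<beta>. c * H \<xi> N kk (count_list \<alpha>) \<beta>)" by auto
  have b: "b < N" using Cons by auto
  have e: "(count_list \<alpha>)(b := Suc (count_list \<alpha> b)) = count_list (b # \<alpha>)"
    by (auto simp: fun_eq_iff)
  have "Wv \<xi> N kk (b # \<alpha>) = Top \<xi> b (Wv \<xi> N kk \<alpha>)" by (simp add: Wv_def)
  also have "\<dots> = (\<lambda>\<beta>. (c * (of_nat (kk b - count_list \<alpha> b) * of_nat (Suc (count_list \<alpha> b)))) * H \<xi> N kk (count_list (b # \<alpha>)) \<beta>)"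
    unfolding c by (rule ext, subst Top_scale, subst Top_H[OF b], simp add: e)
  finally show ?case by blast
qed

lemma W_zero: "set \<alpha> \<subseteq> {..<N} \<Longrightarrow> a < N \<Longrightarrow> count_list \<alpha> a > kk a \<Longrightarrow> Wv \<xi> N kk \<alpha> \<beta> = 0"
  using W_H[of \<alpha> N \<xi> kk] H_zero by force

definition geomf :: "complex \<Rightarrow> complex fps" where "geomf c = Abs_fps (\<lambda>i. c ^ i)"

lemma geomf_inv: "fps_of_poly [:1, - c:] * geomf c = 1"
proof (rule fps_ext)
  fix n
  have "fps_of_poly [:1, - c:] * geomf c = geomf c + fps_const (- c) * (fps_X * geomf c)"
    by (simp add: fps_of_poly_linear' algebra_simps)
  then show "fps_nth (fps_of_poly [:1, - c:] * geomf c) n = fps_nth (1 :: complex fps) n"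
    by (cases n) (simp_all add: geomf_def)
qed

definition gp :: "(nat \<Rightarrow> complex) \<Rightarrow> nat list \<Rightarrow> complex fps" where
  "gp \<zeta> \<alpha> = prod_list (map (\<lambda>a. geomf (\<zeta> a)) \<alpha>)"

lemma prod_pow_split:
  fixes b N :: nat and e :: "nat \<Rightarrow> nat"
  shows "b < N \<Longrightarrow> e b \<ge> 1 \<Longrightarrow>
  (\<Prod>a<N. (p a :: complex poly) ^ e a) = p b * (\<Prod>a<N. p a ^ (e(b := e b - 1)) a)"
proof -
  assume b: "b < N" and e: "e b \<ge> 1"
  have "(\<Prod>a<N. p a ^ e a) = p b ^ e b  * (\<Prod>a\<in>{..<N}-{b}. p a ^ e a)"
    using prod.remove[where A="{..<N}" and x=b and g="\<lambda>a. p a ^ e a"] b by simp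
  moreover have "(\<Prod>a<N. p a ^ (e(b := e b - 1)) a) = p b ^ (e b - 1) * (\<Prod>a\<in>{..<N}-{b}. p a ^ (e(b := e b - 1)) a)"
    using prod.remove[where A="{..<N}" and x=b and g="\<lambda>a. p a ^ (e(b := e b - 1)) a"] b by simp
  moreover have "(\<Prod>a\<in>{..<N}-{b}. p a ^ (e(b := e b - 1)) a) = (\<Prod>a\<in>{..<N}-{b}. p a ^ e a)"
    by (rule prod.cong) auto
  moreover have "p b ^ e b = p b * p b ^ (e b - 1)" using e
    by (cases "e b") auto
  ultimately show ?thesis by simp
qed

lemma fps_core:
  assumes "set \<alpha> \<subseteq> {..<N}" "\<forall>a. count_list \<alpha> a \<le> e a"
  shows "fps_of_poly (\<Prod>a<N. [:1, - \<zeta> a:] ^ e a) * gp \<zeta> \<alpha> = fps_of_poly (\<Prod>a<N. [:1, - \<zeta> a:] ^ (e a - count_list \<alpha> a))"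
  using assms
proof (induction \<alpha> arbitrary: e)
  case Nil
  then show ?case by (simp add: gp_def)
next
  case (Cons b \<alpha>)
  have b: "b < N" using Cons by auto
  have eb: "e b \<ge> 1" using Cons.prems(2)[rule_format, of b] by simp
  define e' where "e' = e(b := e b - 1)"
  have c': "\<forall>a. count_list \<alpha> a \<le> e' a"
  proof
    fix a
    have "count_list (b # \<alpha>) a \<le> e a" using Cons.prems(2) by blast
    then show "count_list \<alpha> a \<le> e' a" unfolding e'_def by (cases "a = b") auto
  qed
  have IH: "fps_of_poly (\<Prod>a<N. [:1, - \<zeta> a:] ^ e' a) * gp \<zeta> \<alpha> = fps_of_poly (\<Prod>a<N. [:1, - \<zeta> a:] ^ (e' a - count_list \<alpha> a))"
    using Cons.IH[of e'] Cons.prems(1) c' by auto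
  have ee: "(\<Prod>a<N. [:1, - \<zeta> a:] ^ (e' a - count_list \<alpha> a)) = (\<Prod>a<N. [:1, - \<zeta> a:] ^ (e a - count_list (b # \<alpha>) a))"
    by (rule prod.cong) (auto simp: e'_def)
  have "fps_of_poly (\<Prod>a<N. [:1, - \<zeta> a:] ^ e a) * gp \<zeta> (b # \<alpha>) =
     (fps_of_poly [:1, - \<zeta> b:] * geomf (\<zeta> b)) * (fps_of_poly (\<Prod>a<N. [:1, - \<zeta> a:] ^ e' a) * gp \<zeta> \<alpha>)"
    unfolding prod_pow_split[where p="\<lambda>a. [:1, - \<zeta> a:]" and b=b and e=e and N=N, OF b eb] e'_def
    by (simp add: gp_def fps_of_poly_mult algebra_simps)
  also have "\<dots> = fps_of_poly (\<Prod>a<N. [:1, - \<zeta> a:] ^ (e a - count_list (b # \<alpha>) a))"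
    unfolding geomf_inv IH ee by simp
  finally show ?case .
qed

lemma degree_Q:
  fixes \<zeta> :: "nat \<Rightarrow> complex"
  shows "degree (\<Prod>a<N. [:1, - (\<zeta> a :: complex):] ^ d a) \<le> (\<Sum>a<N. d a)"
proof -
  have "degree (\<Prod>a<N. [:1, - \<zeta> a:] ^ d a) \<le> (\<Sum>a<N. degree ([:1, - \<zeta> a:] ^ d a))"
    using degree_prod_sum_le[OF finite_lessThan[of N], of "\<lambda>a. [:1, - \<zeta> a:] ^ d a"] by (simp add: o_def)
  also have "\<dots> \<le> (\<Sum>a<N. d a)"
  proof (rule sum_mono)
    fix a
    have "degree ([:1, - \<zeta> a:] ^ d a) \<le> degree [:1, - \<zeta> a:] * d a" by (rule degree_power_le)
    also have "\<dots> \<le> d a" by (simp add: mult_le_cancel2)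
    finally show "degree ([:1, - \<zeta> a:] ^ d a) \<le> d a" .
  qed
  finally show ?thesis .
qed

lemma scalar_core:
  fixes \<zeta> :: "nat \<Rightarrow> complex"
  assumes "set \<alpha> \<subseteq> {..<N}" "length \<alpha> = \<nu>" "\<forall>a<N. count_list \<alpha> a \<le> kk a"
    and "int j > int (\<Sum>a<N. min \<nu> (kk a)) - int \<nu>"
  shows "fps_nth (fps_of_poly (\<Prod>a<N. [:1, - \<zeta> a:] ^ min \<nu> (kk a)) * gp \<zeta> \<alpha>) j = 0"
proof -
  have ce: "\<forall>a. count_list \<alpha> a \<le> min \<nu> (kk a)"
  proof
    fix a show "count_list \<alpha> a \<le> min \<nu> (kk a)"
    proof (cases "a < N")
      case True then show ?thesis using assms count_le_length[of \<alpha> a] by auto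
    next
      case False then have "a \<notin> set \<alpha>" using assms(1) by auto
      then show ?thesis by simp
    qed
  qed
  have sc: "(\<Sum>a<N. count_list \<alpha> a) = \<nu>" using sum_count_set[OF assms(1)] assms(2) by simp
  have "(\<Sum>a<N. min \<nu> (kk a) - count_list \<alpha> a) = (\<Sum>a<N. min \<nu> (kk a)) - (\<Sum>a<N. count_list \<alpha> a)"
    using ce by (subst sum_subtractf_nat) auto
  moreover have "(\<Sum>a<N. count_list \<alpha> a) \<le> (\<Sum>a<N. min \<nu> (kk a))"
    by (intro sum_mono) (use ce in auto)
  ultimately have "int (\<Sum>a<N. min \<nu> (kk a) - count_list \<alpha> a) < int j"
    using sc assms(4) by (simp add: of_nat_diff)
  then have "degree (\<Prod>a<N. [:1, - \<zeta> a:] ^ (min \<nu> (kk a) - count_list \<alpha> a)) < j"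
    using degree_Q[of \<zeta> "\<lambda>a. min \<nu> (kk a) - count_list \<alpha> a" N] by linarith
  then show ?thesis unfolding fps_core[OF assms(1) ce] by (simp add: coeff_eq_0)
qed




lemma Top_sum_scale: "Top \<xi> b (\<lambda>\<beta>. \<Sum>s\<in>S. c s * g s \<beta>) \<beta> = (\<Sum>s\<in>S. c s * Top \<xi> b (g s) \<beta>)"
  by (simp add: Top_sum Top_scale)

lemma act_word_Cons: "act_word \<zeta> N ((c,i) # w) f = loop_act \<zeta> N c i (act_word \<zeta> N w f)"
  by (simp add: act_word_def)

lemma L_finite: "finite {is::nat list. length is = n \<and> sum_list is = j}"
proof (rule finite_subset)
  show "{is::nat list. length is = n \<and> sum_list is = j} \<subseteq> {xs. set xs \<subseteq> {..j} \<and> length xs = n}"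
    using member_le_sum_list by fastforce
  show "finite {xs. set xs \<subseteq> {..j} \<and> length xs = n}"
    by (rule finite_lists_length_eq) simp
qed

lemma L_split: "(\<Sum>is\<in>{is::nat list. length is = Suc n \<and> sum_list is = j}. g is) =
   (\<Sum>i\<in>{0..j}. \<Sum>is\<in>{is. length is = n \<and> sum_list is = j - i}. g (i # is))"
proof -
  let ?S = "SIGMA i:{0..j}. {is::nat list. length is = n \<and> sum_list is = j - i}"
  have img: "{is::nat list. length is = Suc n \<and> sum_list is = j} = (\<lambda>(i,is). i # is) ` ?S"
  proof
    show "{is::nat list. length is = Suc n \<and> sum_list is = j} \<subseteq> (\<lambda>(i,is). i # is) ` ?S"
    proof
      fix xs :: "nat list" assume "xs \<in> {is. length is = Suc n \<and> sum_list is = j}"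
      then obtain i ys where "xs = i # ys" "length ys = n" "i + sum_list ys = j"
        by (cases xs) auto
      then show "xs \<in> (\<lambda>(i,is). i # is) ` ?S" by (intro image_eqI[of _ _ "(i,ys)"]) auto
    qed
    show "(\<lambda>(i,is). i # is) ` ?S \<subseteq> {is::nat list. length is = Suc n \<and> sum_list is = j}"
      by auto
  qed
  have inj: "inj_on (\<lambda>(i,is). i # (is::nat list)) ?S" by (auto simp: inj_on_def)
  have "(\<Sum>i\<in>{0..j}. \<Sum>is\<in>{is. length is = n \<and> sum_list is = j - i}. g (i # is)) =
     (\<Sum>(i,is)\<in>?S. g (i # is))"
    by (rule sum.Sigma) (auto simp: L_finite)
  also have "\<dots> = (\<Sum>xs\<in>(\<lambda>(i,is). i # is) ` ?S. g xs)"
    by (subst sum.reindex[OF inj]) (simp add: case_prod_unfold o_def)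
  finally show ?thesis unfolding img by simp
qed

definition Lists :: "nat \<Rightarrow> nat \<Rightarrow> nat list set" where
  "Lists N n = {\<alpha>. set \<alpha> \<subseteq> {..<N} \<and> length \<alpha> = n}"

lemma Lists_finite: "finite (Lists N n)"
  unfolding Lists_def by (rule finite_lists_length_eq) simp

lemma Lists_split: "(\<Sum>\<alpha>\<in>Lists N (Suc n). g \<alpha>) = (\<Sum>a<N. \<Sum>\<alpha>\<in>Lists N n. g (a # \<alpha>))"
proof -
  let ?S = "{..<N} \<times> Lists N n"
  have img: "Lists N (Suc n) = (\<lambda>(a,\<alpha>). a # \<alpha>) ` ?S"
  proof
    show "Lists N (Suc n) \<subseteq> (\<lambda>(a,\<alpha>). a # \<alpha>) ` ?S"
    proof
      fix xs assume "xs \<in> Lists N (Suc n)"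
      then obtain a \<alpha> where "xs = a # \<alpha>" "\<alpha> \<in> Lists N n" "a < N"
        unfolding Lists_def by (cases xs) auto
      then show "xs \<in> (\<lambda>(a,\<alpha>). a # \<alpha>) ` ?S" by (intro image_eqI[of _ _ "(a,\<alpha>)"]) auto
    qed
    show "(\<lambda>(a,\<alpha>). a # \<alpha>) ` ?S \<subseteq> Lists N (Suc n)" by (auto simp: Lists_def)
  qed
  have inj: "inj_on (\<lambda>(a,\<alpha>). a # (\<alpha>::nat list)) ?S" by (auto simp: inj_on_def)
  have "(\<Sum>a<N. \<Sum>\<alpha>\<in>Lists N n. g (a # \<alpha>)) = (\<Sum>(a,\<alpha>)\<in>?S. g (a # \<alpha>))"
    by (rule sum.cartesian_product)
  also have "\<dots> = (\<Sum>xs\<in>(\<lambda>(a,\<alpha>). a # \<alpha>) ` ?S. g xs)"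
    by (subst sum.reindex[OF inj]) (simp add: case_prod_unfold o_def)
  finally show ?thesis unfolding img by simp
qed

lemma zexp: "zcoeff \<zeta> N kk \<xi> \<nu> j = (\<lambda>\<beta>. \<Sum>\<alpha>\<in>Lists N \<nu>. fps_nth (gp \<zeta> \<alpha>) j * Wv \<xi> N kk \<alpha> \<beta>)"
proof (induction \<nu> arbitrary: j)
  case 0
  have s: "{is::nat list. length is = 0 \<and> sum_list is = j} = (if j = 0 then {[]} else {})" by auto
  have l: "Lists N 0 = {[]}" by (auto simp: Lists_def)
  show ?case unfolding zcoeff_def s l by (auto simp: gp_def Wv_def act_word_def)
next
  case (Suc \<nu>)
  show ?case
  proof
    fix \<beta>
    have "zcoeff \<zeta> N kk \<xi> (Suc \<nu>) j \<beta> = (\<Sum>i\<in>{0..j}. \<Sum>is\<in>{is. length is = \<nu> \<and> sum_list is = j - i}.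
        \<Sum>a<N. \<zeta> a ^ i * Top \<xi> a (act_word \<zeta> N (map (\<lambda>i. (eta \<xi>, i)) is) (cyc_vec N kk)) \<beta>)"
      unfolding zcoeff_def L_split by (simp add: act_word_Cons loop_eta)
    also have "\<dots> = (\<Sum>i\<in>{0..j}. \<Sum>a<N. \<zeta> a ^ i * Top \<xi> a (zcoeff \<zeta> N kk \<xi> \<nu> (j - i)) \<beta>)"
      unfolding zcoeff_def Top_sum sum_distrib_left
      by (rule sum.cong[OF refl], rule sum.swap)
    also have "\<dots> = (\<Sum>i\<in>{0..j}. \<Sum>a<N. \<zeta> a ^ i * (\<Sum>\<alpha>\<in>Lists N \<nu>. fps_nth (gp \<zeta> \<alpha>) (j - i) * Wv \<xi> N kk (a # \<alpha>) \<beta>))"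
      unfolding Suc.IH Top_sum_scale by (simp add: Wv_def)
    also have "\<dots> = (\<Sum>a<N. \<Sum>\<alpha>\<in>Lists N \<nu>. (\<Sum>i\<in>{0..j}. \<zeta> a ^ i * fps_nth (gp \<zeta> \<alpha>) (j - i)) * Wv \<xi> N kk (a # \<alpha>) \<beta>)"
      unfolding sum_distrib_left sum_distrib_right
      by (subst sum.swap, rule sum.cong[OF refl], subst sum.swap, rule sum.cong[OF refl], rule sum.cong[OF refl])
         (simp add: algebra_simps)
    also have "\<dots> = (\<Sum>\<alpha>\<in>Lists N (Suc \<nu>). fps_nth (gp \<zeta> \<alpha>) j * Wv \<xi> N kk \<alpha> \<beta>)"
      unfolding Lists_split by (simp add: gp_def fps_mult_nth geomf_def)
    finally show "zcoeff \<zeta> N kk \<xi> (Suc \<nu>) j \<beta> = (\<Sum>\<alpha>\<in>Lists N (Suc \<nu>). fps_nth (gp \<zeta> \<alpha>) j * Wv \<xi> N kk \<alpha> \<beta>)" .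
  qed
qed




lemma sum_split_add:
  fixes n m :: nat
  shows "(\<Sum>j<n+m. h j) = (\<Sum>j<n. h j) + (\<Sum>j<m. h (n+j))"
  by (induction m) (auto simp: add.assoc)

lemma fil_zero: "(\<lambda>\<beta>. 0) \<in> fus_fil \<zeta> N kk d"
  unfolding fus_fil_def by (rule CollectI, rule exI[of _ 0]) auto

lemma fil_add:
  assumes "f \<in> fus_fil \<zeta> N kk d" "g \<in> fus_fil \<zeta> N kk d"
  shows "(\<lambda>\<beta>. f \<beta> + g \<beta>) \<in> fus_fil \<zeta> N kk d"
proof -
  obtain n :: nat and cf gg where f: "f = (\<lambda>\<beta>. \<Sum>j<n. cf j * gg j \<beta>)" "\<forall>j<n. gg j \<in> fus_gens \<zeta> N kk d"
    using assms(1) unfolding fus_fil_def by blast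
  obtain m :: nat and cf' gg' where g: "g = (\<lambda>\<beta>. \<Sum>j<m. cf' j * gg' j \<beta>)" "\<forall>j<m. gg' j \<in> fus_gens \<zeta> N kk d"
    using assms(2) unfolding fus_fil_def by blast
  define c2 where "c2 = (\<lambda>j. if j < n then cf j else cf' (j - n))"
  define g2 where "g2 = (\<lambda>j. if j < n then gg j else gg' (j - n))"
  have "(\<lambda>\<beta>. f \<beta> + g \<beta>) = (\<lambda>\<beta>. \<Sum>j<n+m. c2 j * g2 j \<beta>)"
    unfolding sum_split_add f g c2_def g2_def by simp
  moreover have "\<forall>j<n+m. g2 j \<in> fus_gens \<zeta> N kk d"
    using f(2) g(2) unfolding g2_def by auto
  ultimately show ?thesis unfolding fus_fil_def by blast
qed

lemma fil_scale:
  assumes "f \<in> fus_fil \<zeta> N kk d"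
  shows "(\<lambda>\<beta>. c * f \<beta>) \<in> fus_fil \<zeta> N kk d"
proof -
  obtain n :: nat and cf gg where f: "f = (\<lambda>\<beta>. \<Sum>j<n. cf j * gg j \<beta>)" "\<forall>j<n. gg j \<in> fus_gens \<zeta> N kk d"
    using assms(1) unfolding fus_fil_def by blast
  have "(\<lambda>\<beta>. c * f \<beta>) = (\<lambda>\<beta>. \<Sum>j<n. (c * cf j) * gg j \<beta>)"
    unfolding f by (simp add: sum_distrib_left mult.assoc)
  then show ?thesis using f(2) unfolding fus_fil_def
    apply -
    apply (rule CollectI, rule exI[of _ n], rule exI[of _ "\<lambda>j. c * cf j"], rule exI[of _ gg])
    by simp
qed

lemma fil_sum:
  assumes "finite S" "\<forall>s\<in>S. f s \<in> fus_fil \<zeta> N kk d"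
  shows "(\<lambda>\<beta>. \<Sum>s\<in>S. f s \<beta>) \<in> fus_fil \<zeta> N kk d"
  using assms
proof (induction S rule: finite_induct)
  case empty
  then show ?case using fil_zero by simp
next
  case (insert x F)
  then show ?case using fil_add[of "f x" \<zeta> N kk d "\<lambda>\<beta>. \<Sum>s\<in>F. f s \<beta>"] by simp
qed

lemma fil_gen: "g \<in> fus_gens \<zeta> N kk d \<Longrightarrow> g \<in> fus_fil \<zeta> N kk d"
  unfolding fus_fil_def
  by (rule CollectI, rule exI[of _ 1], rule exI[of _ "\<lambda>_. 1"], rule exI[of _ "\<lambda>_. g"]) auto

lemma eta_o5: "eta \<xi> \<in> o5"
  unfolding o5_def set15 by (simp add: eta_def matX_def matY_def matZ_def)

lemma G_fil: "m \<le> d \<Longrightarrow> zcoeff \<zeta> N kk \<xi> \<nu> m \<in> fus_fil \<zeta> N kk d"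
  unfolding zcoeff_def
proof (rule fil_sum[OF L_finite], rule ballI, rule fil_gen)
  fix "is" assume m: "m \<le> d" and i: "is \<in> {is. length is = \<nu> \<and> sum_list is = m}"
  show "act_word \<zeta> N (map (\<lambda>i. (eta \<xi>, i)) is) (cyc_vec N kk) \<in> fus_gens \<zeta> N kk d"
    unfolding fus_gens_def using m i eta_o5
    by (auto intro!: exI[of _ "map (Pair (eta \<xi>)) is"] simp: o_def)
qed

lemma key_identity:
  fixes \<zeta> :: "nat \<Rightarrow> complex"
  assumes "int j > int (\<Sum>a<N. min \<nu> (kk a)) - int \<nu>"
  shows "(\<Sum>l\<in>{0..j}. coeff (\<Prod>a<N. [:1, - \<zeta> a:] ^ min \<nu> (kk a)) l * zcoeff \<zeta> N kk \<xi> \<nu> (j - l) \<beta>) = 0"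
proof -
  let ?P = "\<Prod>a<N. [:1, - \<zeta> a:] ^ min \<nu> (kk a)"
  have "(\<Sum>l\<in>{0..j}. coeff ?P l * zcoeff \<zeta> N kk \<xi> \<nu> (j - l) \<beta>) =
     (\<Sum>\<alpha>\<in>Lists N \<nu>. fps_nth (fps_of_poly ?P * gp \<zeta> \<alpha>) j * Wv \<xi> N kk \<alpha> \<beta>)"
    unfolding zexp fps_mult_nth fps_of_poly_nth sum_distrib_left sum_distrib_right
    by (subst sum.swap) (simp add: algebra_simps)
  also have "\<dots> = 0"
  proof (rule sum.neutral, rule ballI)
    fix \<alpha> assume a: "\<alpha> \<in> Lists N \<nu>"
    show "fps_nth (fps_of_poly ?P * gp \<zeta> \<alpha>) j * Wv \<xi> N kk \<alpha> \<beta> = 0"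
    proof (cases "\<forall>a<N. count_list \<alpha> a \<le> kk a")
      case True
      then show ?thesis using scalar_core[of \<alpha> N \<nu> kk j \<zeta>] a assms by (simp add: Lists_def)
    next
      case False
      then obtain b where "b < N" "count_list \<alpha> b > kk b" by auto
      then show ?thesis using W_zero[of \<alpha> N b kk \<xi> \<beta>] a by (simp add: Lists_def)
    qed
  qed
  finally show ?thesis .
qed

lemma Dsum:
  fixes N k \<nu> :: nat and kk :: "nat \<Rightarrow> nat"
  assumes "\<forall>a<N. kk a \<le> k"
  shows "(\<Sum>i=1..k. int (min \<nu> i) * int (card {a\<in>{..<N}. kk a = i})) = int (\<Sum>a<N. min \<nu> (kk a))"
  using assms
proof (induction N)
  case 0
  then show ?case by simp
next
  case (Suc N)
  have c: "card {a\<in>{..<Suc N}. kk a = i} = card {a\<in>{..<N}. kk a = i} + (if kk N = i then 1 else 0)" for i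
  proof -
    have "{a\<in>{..<Suc N}. kk a = i} = {a\<in>{..<N}. kk a = i} \<union> (if kk N = i then {N} else {})"
      by (auto simp: less_Suc_eq)
    then show ?thesis by (simp add: card_Un_disjoint)
  qed
  have d: "(\<Sum>i=1..k. int (min \<nu> i) * (if kk N = i then 1 else 0)) = int (min \<nu> (kk N))"
  proof -
    have "(\<Sum>i=1..k. int (min \<nu> i) * (if kk N = i then 1 else 0)) = (\<Sum>i\<in>{1..k}. if kk N = i then int (min \<nu> i) else 0)"
      by (rule sum.cong) auto
    also have "\<dots> = (if kk N \<in> {1..k} then int (min \<nu> (kk N)) else 0)"
      by (simp add: sum.delta)
    also have "\<dots> = int (min \<nu> (kk N))" using Suc.prems by auto
    finally show ?thesis .
  qed
  have "(\<Sum>i=1..k. int (min \<nu> i) * int (card {a\<in>{..<Suc N}. kk a = i})) =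
      (\<Sum>i=1..k. int (min \<nu> i) * int (card {a\<in>{..<N}. kk a = i})) + (\<Sum>i=1..k. int (min \<nu> i) * (if kk N = i then 1 else 0))"
    unfolding sum.distrib[symmetric] c by (rule sum.cong) (auto simp: algebra_simps)
  also have "\<dots> = int (\<Sum>a<Suc N. min \<nu> (kk a))" unfolding d using Suc by simp
  finally show ?case .
qed

theorem proposition3p7:
  fixes k N :: nat and kk :: "nat \<Rightarrow> nat" and \<zeta> :: "nat \<Rightarrow> complex" and \<nu> :: nat
  assumes "k \<ge> 1"
    and "\<forall>a<N. kk a \<le> k"
    and "inj_on \<zeta> {..<N}"
  shows "\<forall>\<xi>::complex. \<forall>j::nat.
           int j > (\<Sum>i=1..k. int (min \<nu> i) * int (card {a\<in>{..<N}. kk a = i})) - int \<nu>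
           \<longrightarrow> zcoeff \<zeta> N kk \<xi> \<nu> j \<in> fus_fil_below \<zeta> N kk j"
proof (intro allI impI)
  fix \<xi> :: complex and j :: nat
  assume "int j > (\<Sum>i=1..k. int (min \<nu> i) * int (card {a\<in>{..<N}. kk a = i})) - int \<nu>"
  then have jD: "int j > int (\<Sum>a<N. min \<nu> (kk a)) - int \<nu>" unfolding Dsum[OF assms(2)] .
  let ?P = "\<Prod>a<N. [:1, - \<zeta> a:] ^ min \<nu> (kk a)"
  have P0: "coeff ?P 0 = 1" by (simp add: poly_0_coeff_0[symmetric] poly_prod)
  note KI = key_identity[OF jD, of \<zeta> \<xi>]
  show "zcoeff \<zeta> N kk \<xi> \<nu> j \<in> fus_fil_below \<zeta> N kk j"
  proof (cases "j = 0")
    case True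
    have "zcoeff \<zeta> N kk \<xi> \<nu> j = (\<lambda>\<beta>. 0)"
    proof
      fix \<beta> show "zcoeff \<zeta> N kk \<xi> \<nu> j \<beta> = 0" using KI[of \<beta>] True P0 by simp
    qed
    then show ?thesis using True unfolding fus_fil_below_def by simp
  next
    case False
    have "zcoeff \<zeta> N kk \<xi> \<nu> j = (\<lambda>\<beta>. \<Sum>l\<in>{1..j}. (- coeff ?P l) * zcoeff \<zeta> N kk \<xi> \<nu> (j - l) \<beta>)"
    proof
      fix \<beta>
      have "(\<Sum>l\<in>{0..j}. coeff ?P l * zcoeff \<zeta> N kk \<xi> \<nu> (j - l) \<beta>) =
          zcoeff \<zeta> N kk \<xi> \<nu> j \<beta> + (\<Sum>l\<in>{1..j}. coeff ?P l * zcoeff \<zeta> N kk \<xi> \<nu> (j - l) \<beta>)"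
        by (subst sum.atLeast_Suc_atMost) (simp_all add: P0)
      then show "zcoeff \<zeta> N kk \<xi> \<nu> j \<beta> = (\<Sum>l\<in>{1..j}. (- coeff ?P l) * zcoeff \<zeta> N kk \<xi> \<nu> (j - l) \<beta>)"
        using KI[of \<beta>] by (simp add: sum_negf eq_neg_iff_add_eq_0)
    qed
    moreover have "(\<lambda>\<beta>. \<Sum>l\<in>{1..j}. (- coeff ?P l) * zcoeff \<zeta> N kk \<xi> \<nu> (j - l) \<beta>) \<in> fus_fil \<zeta> N kk (j - 1)"
      by (rule fil_sum[OF finite_atLeastAtMost], rule ballI, rule fil_scale, rule G_fil) auto
    ultimately show ?thesis using False unfolding fus_fil_below_def by simp
  qed
qed


end
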